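(* Let $e,\ell\geq 2$ be integers and let $|\boldsymbol{\lambda},\mathbf{s}\rangle$ be any charged $\ell$-partition. Then the first good vertical $e$-strip of $|\boldsymbol{\lambda},\mathbf{s}\rangle$ is addable. Equivalently, the map $\tilde c_{(1)}$ (adding the first good vertical $e$-strip) is well defined.
   Context: A charged $\ell$-partition $|\boldsymbol{\lambda},\mathbf{s}\rangle$ is an $\ell$-tuple of partitions $\boldsymbol{\lambda}=(\lambda^1,\dots,\lambda^\ell)$ together with $\mathbf{s}=(s_1,\dots,s_\ell)\in\mathbb{Z}^\ell$. A box is a triple $(a,b,j)$ (row $a\geq1$, column $b\geq1$, component $j\in\{1,\dots,\ell\}$); $(a,b,j)\in\boldsymbol{\lambda}$ means it lies in the Young diagram of $\lambda^j$. The content of $\gamma=(a,b,j)$ is $c(\gamma)=b-a+s_j$. Let $\mathcal{W}(\boldsymbol{\lambda},\mathbf{s})$ be the set of boxes $(a,b,j)\notin\boldsymbol{\lambda}$ such that either $b=1$, or $b\geq2$ and $(a,b-1,j)\in\boldsymbol{\lambda}$ (the boxes immediately to the right of each row, rows of length $0$ included). A (level $\ell$) vertical $e$-strip is a sequence of $e$ boxes $\gamma_1=(a_1,b_1,j_1),\dots,\gamma_e=(a_e,b_e,j_e)$ with no $i$ such that $a_{i+1}=a_i$ and $j_{i+1}=j_i$; it is admissible if $c(\gamma_i)=c(\gamma_{i+1})+1$ for all $1\le i<e$ and $j_i\geq j_{i'}$ for all $i<i'$. Let $\mathcal{V}(\boldsymbol{\lambda},\mathbf{s})$ be the set of admissible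 vertical $e$-strips all of whose boxes lie in $\mathcal{W}(\boldsymbol{\lambda},\mathbf{s})$. A vertical $e$-strip $X$ is addable if $X\cap\boldsymbol{\lambda}=\emptyset$ and $\boldsymbol{\lambda}\sqcup X$ is still an $\ell$-tuple of partitions. Order boxes by $\gamma>\gamma'$ iff $c(\gamma)>c(\gamma')$, or $c(\gamma)=c(\gamma')$ and $j<j'$ (where $j,j'$ are the components of $\gamma,\gamma'$); order $e$-tuples of boxes lexicographically with respect to this order; this is a total order on $\mathcal{V}(\boldsymbol{\lambda},\mathbf{s})$. The first good vertical $e$-strip is the maximal element $X_1$ of $\mathcal{V}(\boldsymbol{\lambda},\mathbf{s})$. *)

theory Defs
  imports Main
begin

text \<open>A box is a triple (a, b, j): row a, column b, component j.
  An l-partition is represented by the union of its Young diagrams as a set of boxes.\<close>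

type_synonym box = "nat \<times> nat \<times> nat"

fun brow :: "box \<Rightarrow> nat" where "brow (a, b, j) = a"
fun bcol :: "box \<Rightarrow> nat" where "bcol (a, b, j) = b"
fun bcomp :: "box \<Rightarrow> nat" where "bcomp (a, b, j) = j"

definition valid_box :: "nat \<Rightarrow> box \<Rightarrow> bool" where
  "valid_box l \<gamma> \<longleftrightarrow> 1 \<le> brow \<gamma> \<and> 1 \<le> bcol \<gamma> \<and> 1 \<le> bcomp \<gamma> \<and> bcomp \<gamma> \<le> l"

definition is_multipartition :: "nat \<Rightarrow> box set \<Rightarrow> bool" where
  "is_multipartition l L \<longleftrightarrow> finite L \<and> (\<forall>\<gamma>\<in>L. valid_box l \<gamma>) \<and>
     (\<forall>a b j a' b'. (a, b, j) \<in> L \<and> 1 \<le> a' \<and> a' \<le> a \<and> 1 \<le> b' \<and> b' \<le> b \<longrightarrow> (a', b', j) \<in> L)"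

fun content :: "(nat \<Rightarrow> int) \<Rightarrow> box \<Rightarrow> int" where
  "content s (a, b, j) = int b - int a + s j"

definition Wset :: "nat \<Rightarrow> box set \<Rightarrow> box set" where
  "Wset l L = {(a, b, j). valid_box l (a, b, j) \<and> (a, b, j) \<notin> L \<and>
                 (b = 1 \<or> (2 \<le> b \<and> (a, b - 1, j) \<in> L))}"

definition vertical_strip :: "nat \<Rightarrow> nat \<Rightarrow> box list \<Rightarrow> bool" where
  "vertical_strip l e X \<longleftrightarrow> length X = e \<and> (\<forall>\<gamma>\<in>set X. valid_box l \<gamma>) \<and>
     (\<forall>i. Suc i < e \<longrightarrow> \<not> (brow (X ! Suc i) = brow (X ! i) \<and> bcomp (X ! Suc i) = bcomp (X ! i)))"

definition admissible_strip :: "nat \<Rightarrow> nat \<Rightarrow> (nat \<Rightarrow> int) \<Rightarrow> box list \<Rightarrow> bool" where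
  "admissible_strip l e s X \<longleftrightarrow> vertical_strip l e X \<and>
     (\<forall>i. Suc i < e \<longrightarrow> content s (X ! i) = content s (X ! Suc i) + 1) \<and>
     (\<forall>i i'. i < i' \<and> i' < e \<longrightarrow> bcomp (X ! i') \<le> bcomp (X ! i))"

definition Vset :: "nat \<Rightarrow> nat \<Rightarrow> (nat \<Rightarrow> int) \<Rightarrow> box set \<Rightarrow> box list set" where
  "Vset l e s L = {X. admissible_strip l e s X \<and> set X \<subseteq> Wset l L}"

definition box_gt :: "(nat \<Rightarrow> int) \<Rightarrow> box \<Rightarrow> box \<Rightarrow> bool" where
  "box_gt s \<gamma> \<gamma>' \<longleftrightarrow> content s \<gamma> > content s \<gamma>' \<or>
     (content s \<gamma> = content s \<gamma>' \<and> bcomp \<gamma> < bcomp \<gamma>')"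

definition lex_gt :: "(nat \<Rightarrow> int) \<Rightarrow> box list \<Rightarrow> box list \<Rightarrow> bool" where
  "lex_gt s X Y \<longleftrightarrow> (\<exists>i. i < length X \<and> i < length Y \<and> (\<forall>k<i. X ! k = Y ! k) \<and> box_gt s (X ! i) (Y ! i))"

definition first_good_strip :: "nat \<Rightarrow> nat \<Rightarrow> (nat \<Rightarrow> int) \<Rightarrow> box set \<Rightarrow> box list \<Rightarrow> bool" where
  "first_good_strip l e s L X \<longleftrightarrow> X \<in> Vset l e s L \<and> (\<forall>Y\<in>Vset l e s L. Y \<noteq> X \<longrightarrow> lex_gt s X Y)"

definition addable :: "nat \<Rightarrow> box set \<Rightarrow> box list \<Rightarrow> bool" where
  "addable l L X \<longleftrightarrow> set X \<inter> L = {} \<and> is_multipartition l (L \<union> set X)"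

end

theory Submission
  imports Defs
begin

lemma W_mem: "(a,b,j) \<in> Wset l L \<longleftrightarrow> 1\<le>a \<and> 1\<le>b \<and> 1\<le>j \<and> j\<le>l \<and> (a,b,j) \<notin> L \<and> (b = 1 \<or> 2 \<le> b \<and> (a,b-1,j) \<in> L)"
  by (auto simp: Wset_def valid_box_def)

lemma mp_down: "is_multipartition l L \<Longrightarrow> (a,b,j)\<in>L \<Longrightarrow> 1\<le>a' \<Longrightarrow> a'\<le>a \<Longrightarrow> 1\<le>b' \<Longrightarrow> b'\<le>b \<Longrightarrow> (a',b',j)\<in>L"
  unfolding is_multipartition_def by blast

lemma W_le:
  assumes mp: "is_multipartition l L" and w1: "(a,b,j)\<in>Wset l L" and w2: "(a',b',j)\<in>Wset l L" and "a\<le>a'"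
  shows "b'\<le>b"
proof (rule ccontr)
  assume "\<not> b' \<le> b"
  moreover have "1 \<le> b" using w1 W_mem by blast
  ultimately have "(a',b'-1,j) \<in> L" using w2 W_mem by auto
  moreover have "1 \<le> a" "(a,b,j) \<notin> L" using w1 W_mem by blast+
  ultimately have "(a,b,j) \<in> L" using mp_down[OF mp, of a' "b'-1" j a b] assms(4) \<open>\<not> b' \<le> b\<close> \<open>1 \<le> b\<close> by auto
  then show False using \<open>(a,b,j) \<notin> L\<close> by blast
qed

lemma W_inj:
  assumes mp: "is_multipartition l L" and g1: "\<gamma>\<in>Wset l L" and g2: "\<gamma>'\<in>Wset l L"
    and c: "bcomp \<gamma> = bcomp \<gamma>'" and ct: "content s \<gamma> = content s \<gamma>'"
  shows "\<gamma> = \<gamma>'"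
proof -
  obtain a b j where g: "\<gamma> = (a,b,j)" by (cases \<gamma>) auto
  obtain a' b' j' where g': "\<gamma>' = (a',b',j')" by (cases \<gamma>') auto
  have jj: "j' = j" using c g g' by simp
  have w1: "(a,b,j) \<in> Wset l L" using g1 g by simp
  have w2: "(a',b',j) \<in> Wset l L" using g2 g' jj by simp
  have ct': "int b - int a = int b' - int a'" using ct g g' jj by simp
  consider "a < a'" | "a' < a" | "a = a'" by linarith
  then show ?thesis
  proof cases
    case 1
    then have "b' \<le> b" using W_le[OF mp w1 w2] by simp
    then show ?thesis using ct' 1 by linarith
  next
    case 2
    then have "b \<le> b'" using W_le[OF mp w2 w1] by simp
    then show ?thesis using ct' 2 by linarith
  next
    case 3
    then have "b \<le> b'" "b' \<le> b" using W_le[OF mp w2 w1] W_le[OF mp w1 w2] by simp_all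
    then show ?thesis using 3 g g' jj by simp
  qed
qed

lemma W_row:
  assumes mp: "is_multipartition l L" and w1: "(a,b,j)\<in>Wset l L" and w2: "(a,b',j)\<in>Wset l L"
  shows "b = b'"
  using W_le[OF mp w1 w2] W_le[OF mp w2 w1] by simp

lemma mono_desc:
  assumes "\<forall>i. Suc i < e \<longrightarrow> f (Suc i) \<le> (f i::nat)"
  shows "i \<le> i' \<Longrightarrow> i' < e \<Longrightarrow> f i' \<le> f i"
proof (induction i')
  case 0
  then show ?case by simp
next
  case (Suc i')
  show ?case
  proof (cases "i = Suc i'")
    case False
    then have "f i' \<le> f i" using Suc by simp
    moreover have "f (Suc i') \<le> f i'" using assms Suc.prems by simp
    ultimately show ?thesis by simp
  qed simp
qed

lemma mkV:
  assumes mp: "is_multipartition l L" and len: "length X = e" and sub: "set X \<subseteq> Wset l L"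
    and cont: "\<forall>i. Suc i<e \<longrightarrow> content s (X!i) = content s (X!Suc i)+1"
    and comp: "\<forall>i. Suc i < e \<longrightarrow> bcomp (X!Suc i) \<le> bcomp (X!i)"
  shows "X \<in> Vset l e s L"
proof -
  have valid: "\<forall>\<gamma>\<in>set X. valid_box l \<gamma>" using sub by (auto simp: Wset_def)
  have vert: "\<forall>i. Suc i < e \<longrightarrow> \<not> (brow (X ! Suc i) = brow (X ! i) \<and> bcomp (X ! Suc i) = bcomp (X ! i))"
  proof (intro allI impI notI)
    fix i assume i: "Suc i < e" and eq: "brow (X ! Suc i) = brow (X ! i) \<and> bcomp (X ! Suc i) = bcomp (X ! i)"
    have m1: "X!i \<in> Wset l L" and m2: "X!Suc i \<in> Wset l L" using sub i len nth_mem[of i X] nth_mem[of "Suc i" X] by auto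
    obtain a b j where g: "X!i = (a,b,j)" by (cases "X!i") auto
    obtain a' b' j' where g': "X!Suc i = (a',b',j')" by (cases "X!Suc i") auto
    have "a' = a" "j' = j" using eq g g' by auto
    then have "b = b'" using W_row[OF mp] m1 m2 g g' by metis
    then have "X!i = X!Suc i" using g g' \<open>a' = a\<close> \<open>j' = j\<close> by simp
    then show False using cont i by (metis add_cancel_left_right one_neq_zero)
  qed
  have comp2: "\<forall>i i'. i < i' \<and> i' < e \<longrightarrow> bcomp (X ! i') \<le> bcomp (X ! i)"
    using mono_desc[of e "\<lambda>i. bcomp (X!i)", OF comp] by auto
  show ?thesis unfolding Vset_def admissible_strip_def vertical_strip_def
    using len valid vert cont comp2 sub by auto
qed

lemma V_props:
  assumes "X \<in> Vset l e s L"
  shows "length X = e" "set X \<subseteq> Wset l L" "\<forall>i. Suc i<e \<longrightarrow> content s (X!i) = content s (X!Suc i)+1"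
    "\<forall>i i'. i < i' \<and> i' < e \<longrightarrow> bcomp (X ! i') \<le> bcomp (X ! i)"
  using assms unfolding Vset_def admissible_strip_def vertical_strip_def by auto

lemma V_content:
  assumes "X \<in> Vset l e s L"
  shows "k < e \<Longrightarrow> content s (X!k) = content s (X!0) - int k"
proof (induction k)
  case (Suc k)
  then show ?case using V_props(3)[OF assms, rule_format, of k] by simp
qed simp

lemma box_gt_trans: "box_gt s x y \<Longrightarrow> box_gt s y z \<Longrightarrow> box_gt s x z"
  unfolding box_gt_def by auto

lemma box_gt_irrefl: "\<not> box_gt s x x"
  unfolding box_gt_def by auto

lemma lex_gt_irrefl: "\<not> lex_gt s X X"
  unfolding lex_gt_def using box_gt_irrefl by blast

lemma lex_gt_trans:
  assumes "lex_gt s X Y" "lex_gt s Y Z" shows "lex_gt s X Z"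
proof -
  obtain i where i: "i < length X" "i < length Y" "\<forall>k<i. X ! k = Y ! k" "box_gt s (X ! i) (Y ! i)"
    using assms(1) unfolding lex_gt_def by blast
  obtain k where k: "k < length Y" "k < length Z" "\<forall>m<k. Y ! m = Z ! m" "box_gt s (Y ! k) (Z ! k)"
    using assms(2) unfolding lex_gt_def by blast
  consider "i < k" | "k < i" | "i = k" by linarith
  then show ?thesis
  proof cases
    case 1
    then show ?thesis unfolding lex_gt_def using i k
      by (intro exI[of _ i]) auto
  next
    case 2
    then show ?thesis unfolding lex_gt_def using i k
      by (intro exI[of _ k]) auto
  next
    case 3
    then show ?thesis unfolding lex_gt_def using i k box_gt_trans
      by (intro exI[of _ k]) auto
  qed
qed

lemma lex_total:
  assumes mp: "is_multipartition l L" and X: "X \<in> Vset l e s L" and Y: "Y \<in> Vset l e s L" and ne: "X \<noteq> Y"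
  shows "lex_gt s X Y \<or> lex_gt s Y X"
proof -
  have lx: "length X = e" and ly: "length Y = e" using V_props(1)[OF X] V_props(1)[OF Y] by auto
  have ex: "\<exists>i. i < e \<and> X!i \<noteq> Y!i"
  proof (rule ccontr)
    assume "\<not> (\<exists>i. i < e \<and> X!i \<noteq> Y!i)"
    then have "X = Y" using lx ly by (intro nth_equalityI) auto
    then show False using ne by simp
  qed
  define i where "i = (LEAST i. i < e \<and> X!i \<noteq> Y!i)"
  have i: "i < e" "X!i \<noteq> Y!i" using LeastI_ex[OF ex] unfolding i_def by auto
  have before: "\<forall>k<i. X!k = Y!k"
  proof (intro allI impI)
    fix k assume "k<i"
    then have "\<not> (k < e \<and> X!k \<noteq> Y!k)" using not_less_Least[of k "\<lambda>i. i < e \<and> X!i \<noteq> Y!i"] unfolding i_def by blast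
    then show "X!k = Y!k" using \<open>k<i\<close> i(1) by simp
  qed
  have wx: "X!i \<in> Wset l L" using V_props(2)[OF X] i lx nth_mem[of i X] by blast
  have wy: "Y!i \<in> Wset l L" using V_props(2)[OF Y] i ly nth_mem[of i Y] by blast
  have "\<not> (bcomp (X!i) = bcomp (Y!i) \<and> content s (X!i) = content s (Y!i))"
    using W_inj[OF mp wx wy] i by blast
  then have "box_gt s (X!i) (Y!i) \<or> box_gt s (Y!i) (X!i)"
    unfolding box_gt_def by auto
  then show ?thesis
  proof
    assume "box_gt s (X!i) (Y!i)"
    then have "lex_gt s X Y" unfolding lex_gt_def using i lx ly before by (intro exI[of _ i]) simp
    then show ?thesis ..
  next
    assume "box_gt s (Y!i) (X!i)"
    then have "lex_gt s Y X" unfolding lex_gt_def using i lx ly before by (intro exI[of _ i]) simp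
    then show ?thesis ..
  qed
qed

lemma finite_max:
  assumes fin: "finite S" and ne: "S \<noteq> {}" and sub: "S \<subseteq> Vset l e s L" and mp: "is_multipartition l L"
  shows "\<exists>m\<in>S. \<forall>y\<in>S. y \<noteq> m \<longrightarrow> lex_gt s m y"
  using fin ne sub
proof (induction S rule: finite_ne_induct)
  case (singleton x)
  then show ?case by blast
next
  case (insert x F)
  then obtain m where m: "m \<in> F" "\<forall>y\<in>F. y \<noteq> m \<longrightarrow> lex_gt s m y" by blast
  have "x \<noteq> m" using m(1) \<open>x \<notin> F\<close> by blast
  have xv: "x \<in> Vset l e s L" and mv: "m \<in> Vset l e s L" using insert.prems m(1) by blast+
  have "lex_gt s x m \<or> lex_gt s m x" using lex_total[OF mp xv mv \<open>x \<noteq> m\<close>] .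
  then show ?case
  proof
    assume xm: "lex_gt s x m"
    have "\<forall>y\<in>insert x F. y \<noteq> x \<longrightarrow> lex_gt s x y"
    proof (intro ballI impI)
      fix y assume y: "y \<in> insert x F" "y \<noteq> x"
      then have "y \<in> F" by simp
      show "lex_gt s x y"
      proof (cases "y = m")
        case True
        then show ?thesis using xm by simp
      next
        case False
        then have "lex_gt s m y" using m(2) \<open>y \<in> F\<close> by blast
        then show ?thesis using lex_gt_trans[OF xm] by blast
      qed
    qed
    then show ?thesis by blast
  next
    assume "lex_gt s m x"
    then have "\<forall>y\<in>insert x F. y \<noteq> m \<longrightarrow> lex_gt s m y" using m(2) by blast
    then show ?thesis using m(1) by blast
  qed
qed

lemma exists_good:
  assumes mp: "is_multipartition l L" and l1: "1 \<le> l"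
  shows "\<exists>X. first_good_strip l e s L X"
proof -
  have finL: "finite L" using mp is_multipartition_def by blast
  define A where "A = Suc (Max (brow ` L))"
  have notin: "(A+k, b, j) \<notin> L" for k b j
  proof
    assume h: "(A+k,b,j) \<in> L"
    then have "brow (A+k,b,j) \<in> brow ` L" by (rule imageI)
    then have "brow (A+k,b,j) \<le> Max (brow ` L)" using finL by (intro Max_ge) auto
    then show False unfolding A_def by simp
  qed
  define X0 where "X0 = map (\<lambda>k. (A+k, 1::nat, 1::nat)) [0..<e]"
  have X0V: "X0 \<in> Vset l e s L"
  proof (rule mkV[OF mp])
    show "length X0 = e" by (simp add: X0_def)
    show "set X0 \<subseteq> Wset l L" using notin l1 by (auto simp: X0_def W_mem A_def)
    show "\<forall>i. Suc i<e \<longrightarrow> content s (X0!i) = content s (X0!Suc i)+1" by (simp add: X0_def)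
    show "\<forall>i. Suc i<e \<longrightarrow> bcomp (X0!Suc i) \<le> bcomp (X0!i)" by (simp add: X0_def)
  qed
  define c0 where "c0 = content s (X0!0)"
  define V' where "V' = {X \<in> Vset l e s L. X = X0 \<or> lex_gt s X X0}"
  define Bc where "Bc = Suc (Max (bcol ` L))"
  define Sm where "Sm = Max (s ` {..l})"
  define N where "N = nat (int Bc + Sm - c0 + int e)"
  define Bd where "Bd = {\<gamma> \<in> Wset l L. content s \<gamma> \<ge> c0 - int e}"
  have Bd_sub: "Bd \<subseteq> {..N} \<times> {..Bc} \<times> {..l}"
  proof
    fix \<gamma> assume "\<gamma> \<in> Bd"
    obtain a b j where g: "\<gamma> = (a,b,j)" by (cases \<gamma>) auto
    have w: "(a,b,j) \<in> Wset l L" and ct: "int b - int a + s j \<ge> c0 - int e" using \<open>\<gamma>\<in>Bd\<close> g Bd_def by auto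
    have jl: "j \<le> l" using w W_mem by blast
    have bB: "b \<le> Bc"
    proof -
      have "b = 1 \<or> (a, b-1, j) \<in> L" using w W_mem by blast
      then show ?thesis
      proof
        assume "(a,b-1,j) \<in> L"
        then have "bcol (a,b-1,j) \<in> bcol ` L" by (rule imageI)
        then have "bcol (a,b-1,j) \<le> Max (bcol ` L)" using finL by (intro Max_ge) auto
        then show ?thesis unfolding Bc_def by simp
      qed (simp add: Bc_def)
    qed
    have "s j \<le> Sm" unfolding Sm_def using jl by (intro Max_ge) auto
    then have h: "int a \<le> int Bc + Sm - c0 + int e" using ct bB by linarith
    have "a \<le> N" unfolding N_def using nat_mono[OF h] by simp
    then show "\<gamma> \<in> {..N} \<times> {..Bc} \<times> {..l}" using g jl bB by auto
  qed
  have finBd: "finite Bd" by (rule finite_subset[OF Bd_sub]) auto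
  have V'_sub: "V' \<subseteq> {xs. set xs \<subseteq> Bd \<and> length xs = e}"
  proof
    fix X assume "X \<in> V'"
    then have XV: "X \<in> Vset l e s L" and or: "X = X0 \<or> lex_gt s X X0" by (auto simp: V'_def)
    have ge: "content s (X!0) \<ge> c0"
      using or
    proof
      assume "X = X0" then show ?thesis by (simp add: c0_def)
    next
      assume "lex_gt s X X0"
      then obtain i where i: "i < length X" "i < length X0" "\<forall>k<i. X!k = X0!k" "box_gt s (X!i) (X0!i)"
        unfolding lex_gt_def by blast
      show ?thesis
      proof (cases "i = 0")
        case True then show ?thesis using i(4) by (auto simp: c0_def box_gt_def)
      next
        case False then show ?thesis using i(3) by (simp add: c0_def)
      qed
    qed
    have le: "length X = e" using V_props(1)[OF XV] .
    have "set X \<subseteq> Bd"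
    proof
      fix \<gamma> assume "\<gamma> \<in> set X"
      then obtain k where k: "k < length X" "X!k = \<gamma>" by (auto simp: in_set_conv_nth)
      have "content s \<gamma> = content s (X!0) - int k" using V_content[OF XV, of k] k le by simp
      moreover have "\<gamma> \<in> Wset l L" using V_props(2)[OF XV] \<open>\<gamma> \<in> set X\<close> by blast
      ultimately show "\<gamma> \<in> Bd" using ge k le by (auto simp: Bd_def)
    qed
    then show "X \<in> {xs. set xs \<subseteq> Bd \<and> length xs = e}" using le by simp
  qed
  have finV': "finite V'" by (rule finite_subset[OF V'_sub finite_lists_length_eq[OF finBd]])
  have X0V': "X0 \<in> V'" using X0V by (simp add: V'_def)
  have V'V: "V' \<subseteq> Vset l e s L" by (auto simp: V'_def)
  have "V' \<noteq> {}" using X0V' by blast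
  then obtain m where m: "m \<in> V'" "\<forall>y\<in>V'. y \<noteq> m \<longrightarrow> lex_gt s m y"
    using finite_max[OF finV' _ V'V mp] by blast
  have mV: "m \<in> Vset l e s L" using m(1) V'V by blast
  have mX0: "m = X0 \<or> lex_gt s m X0" using m(1) by (simp add: V'_def)
  have "\<forall>Y\<in>Vset l e s L. Y \<noteq> m \<longrightarrow> lex_gt s m Y"
  proof (intro ballI impI)
    fix Y assume YV: "Y \<in> Vset l e s L" and Ym: "Y \<noteq> m"
    show "lex_gt s m Y"
    proof (cases "Y \<in> V'")
      case True then show ?thesis using m(2) Ym by blast
    next
      case False
      then have "Y \<noteq> X0" "\<not> lex_gt s Y X0" using X0V' YV by (auto simp: V'_def)
      then have X0Y: "lex_gt s X0 Y" using lex_total[OF mp X0V YV] by blast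
      show ?thesis using mX0
      proof
        assume "m = X0" then show ?thesis using X0Y by simp
      next
        assume "lex_gt s m X0" then show ?thesis using lex_gt_trans X0Y by blast
      qed
    qed
  qed
  then show ?thesis using mV unfolding first_good_strip_def by blast
qed

lemma good_K:
  assumes mp: "is_multipartition l L" and good: "first_good_strip l e s L X"
    and i: "i < e" and g: "X!i = (a,b,j)" and a2: "2 \<le> a"
  shows "(a-1,b,j) \<in> L \<union> set X"
proof (rule ccontr)
  assume "\<not> (a-1,b,j) \<in> L \<union> set X"
  then have dL: "(a-1,b,j) \<notin> L" and dX: "(a-1,b,j) \<notin> set X" by auto
  define \<delta> where "\<delta> = (a-1,b,j)"
  have XV: "X \<in> Vset l e s L" and mx: "\<forall>Y\<in>Vset l e s L. Y \<noteq> X \<longrightarrow> lex_gt s X Y"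
    using good unfolding first_good_strip_def by blast+
  have le: "length X = e" using V_props(1)[OF XV] .
  have subW: "set X \<subseteq> Wset l L" using V_props(2)[OF XV] .
  have wg: "(a,b,j) \<in> Wset l L" using subW nth_mem[of i X] i le g by auto
  have wd: "\<delta> \<in> Wset l L"
  proof -
    have h: "1\<le>b" "1\<le>j" "j\<le>l" "b = 1 \<or> 2 \<le> b \<and> (a,b-1,j) \<in> L" using wg W_mem by blast+
    have "b = 1 \<or> 2 \<le> b \<and> (a-1,b-1,j) \<in> L"
      using h(4) mp_down[OF mp, of a "b-1" j "a-1" "b-1"] a2 by auto
    then show ?thesis unfolding \<delta>_def W_mem using h dL a2 by auto
  qed
  have cd: "content s \<delta> = content s (X!i) + 1" using g a2 by (simp add: \<delta>_def)
  have bd: "bcomp \<delta> = j" by (simp add: \<delta>_def)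
  have bg: "bcomp (X!i) = j" using g by simp
  have contra: False if YV: "Y \<in> Vset l e s L" and YX: "lex_gt s Y X" for Y
  proof -
    have "Y \<noteq> X" using YX lex_gt_irrefl by metis
    then have "lex_gt s X Y" using mx YV by blast
    then have "lex_gt s X X" using lex_gt_trans YX by blast
    then show False using lex_gt_irrefl by metis
  qed
  show False
  proof (cases i)
    case 0
    define Y where "Y = \<delta> # take (e-1) X"
    have e0: "0 < e" using i by simp
    have lY: "length Y = e" using le e0 by (simp add: Y_def)
    have Y0: "Y!0 = \<delta>" by (simp add: Y_def)
    have YS: "Suc k < e \<Longrightarrow> Y!Suc k = X!k" for k using le by (simp add: Y_def)
    have YV: "Y \<in> Vset l e s L"
    proof (rule mkV[OF mp lY])
      show "set Y \<subseteq> Wset l L" using wd subW set_take_subset[of "e-1" X] by (auto simp: Y_def)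
      show "\<forall>k. Suc k<e \<longrightarrow> content s (Y!k) = content s (Y!Suc k)+1"
      proof (intro allI impI)
        fix k assume k: "Suc k < e"
        show "content s (Y!k) = content s (Y!Suc k)+1"
        proof (cases k)
          case 0 then show ?thesis using Y0 YS[of 0] k cd \<open>i = 0\<close> by simp
        next
          case (Suc k') then show ?thesis using YS[of k] YS[of k'] k V_props(3)[OF XV] by simp
        qed
      qed
      show "\<forall>k. Suc k<e \<longrightarrow> bcomp (Y!Suc k) \<le> bcomp (Y!k)"
      proof (intro allI impI)
        fix k assume k: "Suc k < e"
        show "bcomp (Y!Suc k) \<le> bcomp (Y!k)"
        proof (cases k)
          case 0 then show ?thesis using Y0 YS[of 0] k bd bg \<open>i = 0\<close> by simp
        next
          case (Suc k') then show ?thesis using YS[of k] YS[of k'] k V_props(4)[OF XV, rule_format, of k' k] by simp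
        qed
      qed
    qed
    have "box_gt s (Y!0) (X!0)" using Y0 cd \<open>i = 0\<close> by (simp add: box_gt_def)
    then have "lex_gt s Y X" unfolding lex_gt_def using lY le e0 by (intro exI[of _ 0]) simp
    then show False using contra YV by blast
  next
    case (Suc i')
    define Y where "Y = X[i' := \<delta>]"
    have ii: "Suc i' < e" using i Suc by simp
    have ci': "content s (X!i') = content s (X!i) + 1" using V_props(3)[OF XV] ii Suc by simp
    have cmp: "bcomp (X!i) \<le> bcomp (X!i')" using V_props(4)[OF XV, rule_format, of i' i] ii Suc by simp
    have wi': "X!i' \<in> Wset l L" using subW nth_mem[of i' X] ii le by auto
    have ndi: "\<delta> \<noteq> X!i'" using dX nth_mem[of i' X] ii le unfolding \<delta>_def by auto
    have "bcomp (X!i') \<noteq> j"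
    proof
      assume "bcomp (X!i') = j"
      then have "\<delta> = X!i'" using W_inj[OF mp wd wi', of s] bd cd ci' by simp
      then show False using ndi by simp
    qed
    then have jlt: "j < bcomp (X!i')" using cmp bg by simp
    have lY: "length Y = e" using le by (simp add: Y_def)
    have Yk: "k < e \<Longrightarrow> Y!k = (if k = i' then \<delta> else X!k)" for k using le by (simp add: Y_def)
    have Yc: "k < e \<Longrightarrow> content s (Y!k) = content s (X!k)" for k using Yk[of k] cd ci' by auto
    have YV: "Y \<in> Vset l e s L"
    proof (rule mkV[OF mp lY])
      show "set Y \<subseteq> Wset l L" using wd subW set_update_subset_insert[of X i' \<delta>] by (auto simp: Y_def)
      show "\<forall>k. Suc k<e \<longrightarrow> content s (Y!k) = content s (Y!Suc k)+1"
        using Yc V_props(3)[OF XV] by simp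
      show "\<forall>k. Suc k<e \<longrightarrow> bcomp (Y!Suc k) \<le> bcomp (Y!k)"
      proof (intro allI impI)
        fix k assume k: "Suc k < e"
        consider "k = i'" | "Suc k = i'" | "k \<noteq> i'" "Suc k \<noteq> i'" by blast
        then show "bcomp (Y!Suc k) \<le> bcomp (Y!k)"
        proof cases
          case 1 then show ?thesis using Yk[of k] Yk[of "Suc k"] k bd bg Suc by simp
        next
          case 2 then show ?thesis using Yk[of k] Yk[of "Suc k"] k bd jlt
              V_props(4)[OF XV, rule_format, of k i'] by simp
        next
          case 3 then show ?thesis using Yk[of k] Yk[of "Suc k"] k
              V_props(4)[OF XV, rule_format, of k "Suc k"] by simp
        qed
      qed
    qed
    have "box_gt s (Y!i') (X!i')" using Yk[of i'] ii cd ci' bd jlt by (simp add: box_gt_def)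
    moreover have "\<forall>k<i'. Y!k = X!k" using Yk ii by simp
    ultimately have "lex_gt s Y X" unfolding lex_gt_def using lY le ii by (intro exI[of _ i']) simp
    then show False using contra YV by blast
  qed
qed

lemma good_addable:
  assumes mp: "is_multipartition l L" and good: "first_good_strip l e s L X"
  shows "addable l L X"
proof -
  have XV: "X \<in> Vset l e s L" using good unfolding first_good_strip_def by blast
  have le: "length X = e" using V_props(1)[OF XV] .
  have subW: "set X \<subseteq> Wset l L" using V_props(2)[OF XV] .
  have disj: "set X \<inter> L = {}" using subW by (auto simp: Wset_def)
  have K: "(a-1,b,j) \<in> L \<union> set X" if ab: "(a,b,j) \<in> set X" "2 \<le> a" for a b j
  proof -
    obtain i where "i < length X" "X!i = (a,b,j)" using ab(1) in_set_conv_nth[of "(a,b,j)" X] by blast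
    then show ?thesis using good_K[OF mp good _ _ ab(2)] le by simp
  qed
  have finL: "finite L" using mp is_multipartition_def by blast
  have validL: "\<forall>\<gamma>\<in>L. valid_box l \<gamma>" using mp is_multipartition_def by blast
  have down: "\<forall>b. (a,b,j) \<in> L \<union> set X \<longrightarrow> (\<forall>a' b'. 1\<le>a' \<and> a'\<le>a \<and> 1\<le>b' \<and> b'\<le>b \<longrightarrow> (a',b',j) \<in> L \<union> set X)" for a j
  proof (induction a)
    case 0
    then show ?case by simp
  next
    case (Suc n)
    show ?case
    proof (intro allI impI)
      fix b a' b' assume h: "(Suc n,b,j) \<in> L \<union> set X" and r: "1\<le>a' \<and> a'\<le>Suc n \<and> 1\<le>b' \<and> b'\<le>b"
      show "(a',b',j) \<in> L \<union> set X"
      proof (cases "(Suc n,b,j) \<in> L")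
        case True then show ?thesis using mp_down[OF mp True, of a' b'] r by auto
      next
        case False
        then have inX: "(Suc n,b,j) \<in> set X" using h by simp
        then have w: "(Suc n,b,j) \<in> Wset l L" using subW by blast
        show ?thesis
        proof (cases "b' < b")
          case True
          then have "(Suc n, b-1, j) \<in> L" using w W_mem r by auto
          then show ?thesis using mp_down[OF mp, of "Suc n" "b-1" j a' b'] r True by auto
        next
          case False
          then have bb: "b' = b" using r by simp
          show ?thesis
          proof (cases "a' = Suc n")
            case True then show ?thesis using inX bb by simp
          next
            case False
            then have "2 \<le> Suc n" using r by simp
            then have "(n,b,j) \<in> L \<union> set X" using K[OF inX] by simp
            moreover have "1\<le>a' \<and> a'\<le>n \<and> 1\<le>b' \<and> b'\<le>b" using r False bb by auto
            ultimately show ?thesis using Suc.IH by blast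
          qed
        qed
      qed
    qed
  qed
  have "is_multipartition l (L \<union> set X)"
    unfolding is_multipartition_def
  proof (intro conjI)
    show "finite (L \<union> set X)" using finL by simp
    show "\<forall>\<gamma>\<in>L \<union> set X. valid_box l \<gamma>" using validL subW by (auto simp: Wset_def)
    show "\<forall>a b j a' b'. (a, b, j) \<in> L \<union> set X \<and> 1 \<le> a' \<and> a' \<le> a \<and> 1 \<le> b' \<and> b' \<le> b \<longrightarrow> (a', b', j) \<in> L \<union> set X"
      using down by blast
  qed
  then show ?thesis unfolding addable_def using disj by blast
qed

theorem lemma5p8:
  fixes e l :: nat and s :: "nat \<Rightarrow> int" and L :: "box set"
  assumes "e \<ge> 2" and "l \<ge> 2" and "is_multipartition l L"
  shows "\<exists>X. first_good_strip l e s L X \<and> addable l L X"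
proof -
  obtain X where "first_good_strip l e s L X" using exists_good[OF assms(3)] assms(2) by fastforce
  then show ?thesis using good_addable[OF assms(3)] by blast
qed

end
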